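(* Let $n\ge1$ and let $S\subseteq\{0,1\}^n\subset\ell_1^{(n)}$ (with the $\ell_1$ metric) have cardinality greater than $n+1$. Then the generalized roundness of $S$ satisfies $\mathfrak{q}(S)=1$.
   Context: For $p\ge0$, $p$ is a generalized roundness exponent of a metric space $(X,d)$ if for all $m$ and all $a_1,\ldots,a_m,b_1,\ldots,b_m\in X$, $\sum_{k<l}\{d(a_k,a_l)^p+d(b_k,b_l)^p\}\le\sum_{j,i}d(a_j,b_i)^p$; the generalized roundness $\mathfrak{q}(X)$ is the supremum of all generalized roundness exponents. *)

theory Defs
  imports "HOL-Analysis.Analysis"
begin

definition gr_exponent :: "'a set \<Rightarrow> ('a \<Rightarrow> 'a \<Rightarrow> real) \<Rightarrow> real \<Rightarrow> bool" where
  "gr_exponent X d p \<longleftrightarrow> p \<ge> 0 \<and>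
     (\<forall>m::nat. \<forall>a b :: nat \<Rightarrow> 'a. (\<forall>k<m. a k \<in> X \<and> b k \<in> X) \<longrightarrow>
        (\<Sum>l<m. \<Sum>k<l. d (a k) (a l) powr p + d (b k) (b l) powr p)
          \<le> (\<Sum>j<m. \<Sum>i<m. d (a j) (b i) powr p))"

definition gen_roundness :: "'a set \<Rightarrow> ('a \<Rightarrow> 'a \<Rightarrow> real) \<Rightarrow> ereal" where
  "gen_roundness X d = Sup (ereal ` {p. gr_exponent X d p})"

definition l1_dist :: "real ^ 'n \<Rightarrow> real ^ 'n \<Rightarrow> real" where
  "l1_dist x y = (\<Sum>i\<in>UNIV. \<bar>x $ i - y $ i\<bar>)"

end

theory Submission
  imports Defs "HOL-Real_Asymp.Real_Asymp"
begin

definition psd :: "'a set \<Rightarrow> ('a \<Rightarrow> 'a \<Rightarrow> real) \<Rightarrow> bool" where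
  "psd T K \<longleftrightarrow> (\<forall>w. 0 \<le> (\<Sum>x\<in>T. \<Sum>y\<in>T. w x * w y * K x y))"

lemma sum_if_outer: "(\<Sum>y\<in>T. if P then f y else 0) = (if P then (\<Sum>y\<in>T. f y) else 0)"
  by simp

lemma quad_shift:
  fixes u :: "'a \<Rightarrow> real" and M :: "'a \<Rightarrow> 'a \<Rightarrow> real" and t :: real
  assumes "finite T" "x0 \<in> T"
  shows "(\<Sum>x\<in>T. \<Sum>y\<in>T. (u x + (if x = x0 then t else 0)) * (u y + (if y = x0 then t else 0)) * M x y)
   = (\<Sum>x\<in>T. \<Sum>y\<in>T. u x * u y * M x y) + t * (\<Sum>y\<in>T. u y * M x0 y)
     + t * (\<Sum>x\<in>T. u x * M x x0) + t * t * M x0 x0"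
proof -
  have e: "(u x + (if x = x0 then t else 0)) * (u y + (if y = x0 then t else 0)) * M x y
    = u x * u y * M x y + (if x = x0 then t * u y * M x0 y else 0)
      + (if y = x0 then t * u x * M x x0 else 0) + (if x = x0 then (if y = x0 then t * t * M x0 x0 else 0) else 0)" for x y
    by (cases "x = x0"; cases "y = x0") (simp_all add: ring_distribs)
  show ?thesis
    using assms
    apply (simp only: e sum.distrib)
    apply (simp add: sum_if_outer sum.delta sum_distrib_left[symmetric] sum.swap[of "\<lambda>x y. if y = x0 then _ x else 0"] mult.assoc)
    done
qed

lemma psd_diag: 
  assumes "psd T K" "finite T" "x0 \<in> T" shows "0 \<le> K x0 x0"
proof -
  have "0 \<le> (\<Sum>x\<in>T. \<Sum>y\<in>T. (0 + (if x = x0 then 1 else 0)) * (0 + (if y = x0 then 1 else 0)) * K x y)"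
    using assms(1) unfolding psd_def by (rule allE)
  also have "\<dots> = K x0 x0" using quad_shift[OF assms(2,3), of "\<lambda>_. 0" 1 K] by simp
  finally show ?thesis .
qed

lemma psd_cs:
  fixes K :: "'a \<Rightarrow> 'a \<Rightarrow> real"
  assumes "psd T K" "finite T" "x0 \<in> T" "\<And>x y. x \<in> T \<Longrightarrow> y \<in> T \<Longrightarrow> K x y = K y x"
  shows "(\<Sum>x\<in>T. w x * K x x0)^2 \<le> K x0 x0 * (\<Sum>x\<in>T. \<Sum>y\<in>T. w x * w y * K x y)"
proof -
  define B where "B = (\<Sum>x\<in>T. w x * K x x0)"
  define Q where "Q = (\<Sum>x\<in>T. \<Sum>y\<in>T. w x * w y * K x y)"
  define k0 where "k0 = K x0 x0"
  have B2: "(\<Sum>y\<in>T. w y * K x0 y) = B" unfolding B_def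
    by (rule sum.cong) (use assms(3,4) in auto)
  have main: "0 \<le> Q + 2 * t * B + t * t * k0" for t
  proof -
    have "0 \<le> (\<Sum>x\<in>T. \<Sum>y\<in>T. (w x + (if x = x0 then t else 0)) * (w y + (if y = x0 then t else 0)) * K x y)"
      using assms(1) unfolding psd_def by (rule allE)
    also have "\<dots> = Q + 2 * t * B + t * t * k0"
      unfolding quad_shift[OF assms(2,3)] B2 by (simp add: Q_def B_def k0_def)
    finally show ?thesis .
  qed
  have k0: "0 \<le> k0" unfolding k0_def by (rule psd_diag[OF assms(1-3)])
  show ?thesis
  proof (cases "k0 = 0")
    case True
    have "B = 0"
    proof (rule ccontr)
      assume "B \<noteq> 0"
      have "0 \<le> Q + 2 * (-(Q+1)/(2*B)) * B + (-(Q+1)/(2*B)) * (-(Q+1)/(2*B)) * k0" by (rule main)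
      also have "\<dots> = -1" using \<open>B \<noteq> 0\<close> True by (simp add: field_simps)
      finally show False by simp
    qed
    then show ?thesis using True by (simp add: B_def k0_def)
  next
    case False
    then have kp: "k0 > 0" using k0 by simp
    have "0 \<le> Q + 2 * (-B/k0) * B + (-B/k0) * (-B/k0) * k0" by (rule main)
    also have "\<dots> = Q - B^2 / k0" using kp by (simp add: field_simps power2_eq_square)
    finally have "B^2 / k0 \<le> Q" by simp
    then have "B^2 \<le> k0 * Q" using kp by (simp add: field_simps)
    then show ?thesis by (simp add: B_def Q_def k0_def)
  qed
qed

lemma psd_remove:
  fixes K :: "'a \<Rightarrow> 'a \<Rightarrow> real"
  assumes "psd (insert x0 T) K" "finite T" "x0 \<notin> T"
  shows "psd T K"
  unfolding psd_def
proof
  fix w :: "'a \<Rightarrow> real"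
  define w' where "w' = w(x0 := 0)"
  have "0 \<le> (\<Sum>x\<in>insert x0 T. \<Sum>y\<in>insert x0 T. w' x * w' y * K x y)"
    using assms(1) unfolding psd_def by (rule allE)
  also have "\<dots> = (\<Sum>x\<in>T. \<Sum>y\<in>T. w x * w y * K x y)"
    using assms(2,3) unfolding w'_def
    by (simp add: sum.insert) (intro sum.cong refl; use assms(3) in auto)
  finally show "0 \<le> (\<Sum>x\<in>T. \<Sum>y\<in>T. w x * w y * K x y)" .
qed

lemma gram:
  fixes K :: "'a \<Rightarrow> 'a \<Rightarrow> real"
  assumes "finite T" "psd T K" "\<And>x y. x \<in> T \<Longrightarrow> y \<in> T \<Longrightarrow> K x y = K y x"
  shows "\<exists>us. \<forall>x\<in>T. \<forall>y\<in>T. K x y = (\<Sum>u\<leftarrow>us. u x * u y)"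
  using assms
proof (induction T arbitrary: K rule: finite_induct)
  case empty
  then show ?case by auto
next
  case (insert x0 T)
  let ?T = "insert x0 T"
  define k0 where "k0 = K x0 x0"
  have k0: "0 \<le> k0" unfolding k0_def by (rule psd_diag[OF insert.prems(1)]) (use insert.hyps in auto)
  define u where "u x = (if k0 > 0 then K x x0 / sqrt k0 else 0)" for x
  define K' where "K' x y = K x y - u x * u y" for x y
  have col: "K y x0 = u x0 * u y" if y: "y \<in> ?T" for y
  proof (cases "k0 > 0")
    case True
    then have "u x0 * u y = (k0 / sqrt k0) * (K y x0 / sqrt k0)" unfolding u_def k0_def by simp
    also have "\<dots> = K y x0 * (k0 / (sqrt k0 * sqrt k0))" by (simp add: field_simps)
    also have "\<dots> = K y x0" using True by simp
    finally show ?thesis by simp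
  next
    case False
    then have "k0 = 0" using k0 by simp
    have "(\<Sum>x\<in>?T. (if x = y then 1 else 0) * K x x0)^2 \<le> K x0 x0 * (\<Sum>x\<in>?T. \<Sum>y'\<in>?T. (if x = y then 1 else 0) * (if y' = y then 1 else 0) * K x y')"
      by (rule psd_cs) (use insert in auto)
    moreover have "(\<Sum>x\<in>?T. (if x = y then 1 else 0) * K x x0) = (\<Sum>x\<in>?T. if x = y then K y x0 else 0)"
      by (rule sum.cong) auto
    moreover have "(\<Sum>x\<in>?T. if x = y then K y x0 else 0) = K y x0"
      using y insert.hyps(1) by simp
    ultimately have "(K y x0)^2 \<le> 0" using y \<open>k0 = 0\<close> insert.hyps(1) unfolding k0_def
      by simp
    then show ?thesis using False unfolding u_def by simp
  qed
  have psdK': "psd ?T K'"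
    unfolding psd_def
  proof
    fix w :: "'a \<Rightarrow> real"
    have eq: "(\<Sum>x\<in>?T. \<Sum>y\<in>?T. w x * w y * K' x y) = (\<Sum>x\<in>?T. \<Sum>y\<in>?T. w x * w y * K x y) - (\<Sum>x\<in>?T. w x * u x)^2"
      unfolding K'_def power2_eq_square sum_product
      by (simp add: algebra_simps sum_subtractf)
    show "0 \<le> (\<Sum>x\<in>?T. \<Sum>y\<in>?T. w x * w y * K' x y)"
    proof (cases "k0 > 0")
      case True
      have "(\<Sum>x\<in>?T. w x * u x)^2 = (\<Sum>x\<in>?T. w x * K x x0)^2 / k0"
        using True unfolding u_def
        by (simp add: sum_divide_distrib[symmetric] power_divide)
      also have "\<dots> \<le> (\<Sum>x\<in>?T. \<Sum>y\<in>?T. w x * w y * K x y)"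
        using psd_cs[OF insert.prems(1) _ _ insert.prems(2), of x0 w] insert.hyps True
        unfolding k0_def by (simp add: divide_le_eq mult.commute)
      finally show ?thesis unfolding eq by simp
    next
      case False
      then show ?thesis unfolding eq u_def using insert.prems(1) unfolding psd_def by simp
    qed
  qed
  have "psd T K'" by (rule psd_remove[OF psdK' insert.hyps])
  moreover have "\<And>x y. x \<in> T \<Longrightarrow> y \<in> T \<Longrightarrow> K' x y = K' y x"
    unfolding K'_def using insert.prems(2) by auto
  ultimately obtain us where us: "\<forall>x\<in>T. \<forall>y\<in>T. K' x y = (\<Sum>u\<leftarrow>us. u x * u y)"
    using insert.IH by blast
  show ?case
  proof (intro exI[of _ "u # map (\<lambda>f. f(x0 := 0)) us"] ballI)
    fix x y assume x: "x \<in> ?T" and y: "y \<in> ?T"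
    show "K x y = (\<Sum>f\<leftarrow>u # map (\<lambda>f. f(x0 := 0)) us. f x * f y)"
    proof (cases "x = x0")
      case True
      then show ?thesis using col[OF y] insert.prems(2)[OF x y] by (simp add: o_def mult.commute)
    next
      case xn: False
      show ?thesis
      proof (cases "y = x0")
        case True
        then show ?thesis using col[OF x] xn by (simp add: o_def)
      next
        case False
        then have "x \<in> T" "y \<in> T" using x y xn by auto
        then have "K x y - u x * u y = (\<Sum>u\<leftarrow>us. u x * u y)" using us unfolding K'_def by blast
        then show ?thesis using xn False by (simp add: o_def algebra_simps)
      qed
    qed
  qed
qed

lemma psd_gram_mult:
  fixes A B :: "'a \<Rightarrow> 'a \<Rightarrow> real"
  assumes "finite T" "\<forall>x\<in>T. \<forall>y\<in>T. A x y = (\<Sum>u\<leftarrow>us. u x * u y)" "psd T B"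
  shows "psd T (\<lambda>x y. A x y * B x y)"
  unfolding psd_def
proof
  fix w :: "'a \<Rightarrow> real"
  have id: "(\<Sum>x\<in>T. \<Sum>y\<in>T. w x * w y * ((\<Sum>u\<leftarrow>us. u x * u y) * B x y))
     = (\<Sum>u\<leftarrow>us. \<Sum>x\<in>T. \<Sum>y\<in>T. (w x * u x) * (w y * u y) * B x y)"
  proof (induction us)
    case (Cons v us)
    have "(\<Sum>x\<in>T. \<Sum>y\<in>T. w x * w y * ((\<Sum>u\<leftarrow>v # us. u x * u y) * B x y))
      = (\<Sum>x\<in>T. \<Sum>y\<in>T. (w x * v x) * (w y * v y) * B x y + w x * w y * ((\<Sum>u\<leftarrow>us. u x * u y) * B x y))"
      by (intro sum.cong refl) (simp add: distrib_right distrib_left mult_ac)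
    also have "\<dots> = (\<Sum>x\<in>T. \<Sum>y\<in>T. (w x * v x) * (w y * v y) * B x y) + (\<Sum>x\<in>T. \<Sum>y\<in>T. w x * w y * ((\<Sum>u\<leftarrow>us. u x * u y) * B x y))"
      by (simp only: sum.distrib)
    finally show ?case using Cons by simp
  qed simp
  have "(\<Sum>x\<in>T. \<Sum>y\<in>T. w x * w y * (A x y * B x y))
     = (\<Sum>x\<in>T. \<Sum>y\<in>T. w x * w y * ((\<Sum>u\<leftarrow>us. u x * u y) * B x y))"
    using assms(2) by (intro sum.cong refl) auto
  also have "\<dots> \<ge> 0" unfolding id
    by (rule sum_list_nonneg) (use assms(3) in \<open>auto simp: psd_def\<close>)
  finally show "0 \<le> (\<Sum>x\<in>T. \<Sum>y\<in>T. w x * w y * (A x y * B x y))" by simp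
qed

lemma psd_pow:
  fixes K :: "'a \<Rightarrow> 'a \<Rightarrow> real"
  assumes "finite T" "psd T K" "\<And>x y. x \<in> T \<Longrightarrow> y \<in> T \<Longrightarrow> K x y = K y x"
  shows "psd T (\<lambda>x y. K x y ^ n)"
proof (induction n)
  case 0
  have "(\<Sum>x\<in>T. \<Sum>y\<in>T. w x * w y) = (\<Sum>x\<in>T. w x)^2" for w :: "'a \<Rightarrow> real"
    by (simp add: power2_eq_square sum_product)
  then show ?case unfolding psd_def by simp
next
  case (Suc n)
  obtain us where us: "\<forall>x\<in>T. \<forall>y\<in>T. K x y = (\<Sum>u\<leftarrow>us. u x * u y)"
    using gram[OF assms] by blast
  show ?case using psd_gram_mult[OF assms(1) us Suc] by simp
qed

lemma psd_exp:
  fixes K :: "'a \<Rightarrow> 'a \<Rightarrow> real"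
  assumes "finite T" "psd T K" "\<And>x y. x \<in> T \<Longrightarrow> y \<in> T \<Longrightarrow> K x y = K y x" "0 \<le> t"
  shows "psd T (\<lambda>x y. exp (t * K x y))"
  unfolding psd_def
proof
  fix w :: "'a \<Rightarrow> real"
  have S1: "(\<lambda>n. \<Sum>x\<in>T. \<Sum>y\<in>T. w x * w y * ((t * K x y) ^ n /\<^sub>R fact n)) sums
        (\<Sum>x\<in>T. \<Sum>y\<in>T. w x * w y * exp (t * K x y))"
    by (intro sums_sum sums_mult exp_converges)
  have S0: "(\<lambda>n. 0) sums (0::real)" by simp
  have nn: "0 \<le> (\<Sum>x\<in>T. \<Sum>y\<in>T. w x * w y * ((t * K x y) ^ n /\<^sub>R fact n))" for n
  proof -
    have "(\<Sum>x\<in>T. \<Sum>y\<in>T. w x * w y * ((t * K x y) ^ n /\<^sub>R fact n))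
        = (t ^ n / fact n) * (\<Sum>x\<in>T. \<Sum>y\<in>T. w x * w y * K x y ^ n)"
      unfolding sum_distrib_left by (intro sum.cong refl) (simp add: power_mult_distrib divide_inverse mult_ac)
    also have "\<dots> \<ge> 0" using psd_pow[OF assms(1-3), of n] assms(4) unfolding psd_def by simp
    finally show ?thesis .
  qed
  show "0 \<le> (\<Sum>x\<in>T. \<Sum>y\<in>T. w x * w y * exp (t * K x y))"
    by (rule sums_le[OF nn S0 S1])
qed

lemma psd_from_cnd:
  fixes N :: "'a \<Rightarrow> 'a \<Rightarrow> real"
  assumes S: "finite S" "x0 \<in> S" and sym: "\<And>x y. x \<in> S \<Longrightarrow> y \<in> S \<Longrightarrow> N x y = N y x"
    and z: "N x0 x0 = 0"
    and cnd: "\<And>v. sum v S = 0 \<Longrightarrow> (\<Sum>x\<in>S. \<Sum>y\<in>S. v x * v y * N x y) \<le> 0"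
  shows "psd S (\<lambda>x y. N x x0 + N y x0 - N x y)"
  unfolding psd_def
proof
  fix u :: "'a \<Rightarrow> real"
  define s where "s = sum u S"
  define P where "P = (\<Sum>x\<in>S. u x * N x x0)"
  define Q where "Q = (\<Sum>x\<in>S. \<Sum>y\<in>S. u x * u y * N x y)"
  have P2: "(\<Sum>y\<in>S. u y * N x0 y) = P" unfolding P_def
    by (rule sum.cong) (use sym S in auto)
  have "sum (\<lambda>x. u x + (if x = x0 then -s else 0)) S = 0"
    using S by (simp add: sum.distrib s_def)
  then have "(\<Sum>x\<in>S. \<Sum>y\<in>S. (u x + (if x = x0 then -s else 0)) * (u y + (if y = x0 then -s else 0)) * N x y) \<le> 0"
    by (rule cnd)
  then have "Q - 2 * s * P \<le> 0"
    unfolding quad_shift[OF S] P2 z by (simp add: Q_def P_def)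
  moreover have "(\<Sum>x\<in>S. \<Sum>y\<in>S. u x * u y * (N x x0 + N y x0 - N x y)) = 2 * s * P - Q"
  proof -
    have "(\<Sum>x\<in>S. \<Sum>y\<in>S. u x * u y * (N x x0 + N y x0 - N x y))
      = (\<Sum>x\<in>S. \<Sum>y\<in>S. (u x * N x x0) * u y) + (\<Sum>x\<in>S. \<Sum>y\<in>S. u x * (u y * N y x0)) - Q"
      unfolding Q_def by (simp add: sum_subtractf sum.distrib algebra_simps)
    also have "\<dots> = P * s + s * P - Q"
      unfolding P_def s_def sum_product ..
    finally show ?thesis by simp
  qed
  ultimately show "0 \<le> (\<Sum>x\<in>S. \<Sum>y\<in>S. u x * u y * (N x x0 + N y x0 - N x y))" by simp
qed

lemma psd_exp_neg:
  fixes N :: "'a \<Rightarrow> 'a \<Rightarrow> real"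
  assumes S: "finite S" "a \<in> S" and sym: "\<And>x y. x \<in> S \<Longrightarrow> y \<in> S \<Longrightarrow> N x y = N y x"
    and z: "N a a = 0"
    and cnd: "\<And>v. sum v S = 0 \<Longrightarrow> (\<Sum>x\<in>S. \<Sum>y\<in>S. v x * v y * N x y) \<le> 0"
    and t: "0 \<le> t"
  shows "0 \<le> (\<Sum>x\<in>S. \<Sum>y\<in>S. w x * w y * exp (- (t * N x y)))"
proof -
  define K where "K x y = N x a + N y a - N x y" for x y
  define e where "e x = exp (- (t * N x a))" for x
  have pK: "psd S K" unfolding K_def by (rule psd_from_cnd[OF S sym z cnd])
  have sK: "K x y = K y x" if "x \<in> S" "y \<in> S" for x y unfolding K_def using sym[OF that] by simp
  have pE: "psd S (\<lambda>x y. exp (t * K x y))"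
    by (rule psd_exp[OF S(1) pK _ t]) (rule sK)
  have "0 \<le> (\<Sum>x\<in>S. \<Sum>y\<in>S. (w x * e x) * (w y * e y) * exp (t * K x y))"
    using pE unfolding psd_def by (rule allE)
  also have "\<dots> = (\<Sum>x\<in>S. \<Sum>y\<in>S. w x * w y * exp (- (t * N x y)))"
  proof (intro sum.cong refl)
    fix x y
    have "exp (t * K x y) * e x * e y = exp (t * K x y + (- (t * N x a)) + (- (t * N y a)))"
      unfolding e_def by (simp only: exp_add)
    also have "\<dots> = exp (- (t * N x y))" unfolding K_def by (simp add: algebra_simps)
    finally show "(w x * e x) * (w y * e y) * exp (t * K x y) = w x * w y * exp (- (t * N x y))"
      by (metis (no_types, lifting) mult.commute mult.left_commute)
  qed
  finally show ?thesis .
qed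

definition gfun :: "real \<Rightarrow> real \<Rightarrow> real \<Rightarrow> real" where
  "gfun p d r = (if 0 < r then 1 - exp (- (d powr p / r powr p)) else 0)"

lemma gfun_meas: "gfun p d \<in> borel_measurable borel"
  unfolding gfun_def by measurable

lemma gfun_meas2: "gfun p d \<in> borel_measurable lborel"
  unfolding gfun_def by measurable

lemma gfun_scale:
  assumes "d > 0" shows "gfun p d (0 + d * x) = gfun p 1 x"
  using assms unfolding gfun_def
  by (auto simp: powr_mult zero_less_mult_iff)

lemma gfun_int1:
  assumes p: "p > 1"
  shows "integrable lborel (gfun p 1)"
proof -
  define h where "h r = indicator {0<..1} r + indicator {1..} r * r powr (-p)" for r :: real
  have i1: "integrable lborel (indicator {0<..1::real} :: real \<Rightarrow> real)"
    by (rule integrable_real_indicator) auto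
  have hi: "((\<lambda>x::real. x powr (-p)) has_integral -(1 powr (-p+1)) / (-p+1)) {1..}"
    by (rule has_integral_powr_to_inf) (use p in auto)
  have "integral\<^sup>N lborel (\<lambda>x. indicator {1..} x * x powr (-p)) = ennreal (-(1 powr (-p+1)) / (-p+1))"
    by (rule nn_integral_has_integral_lebesgue[OF _ hi]) auto
  then have i2: "integrable lborel (\<lambda>x. indicator {1..} x * x powr (-p))"
    by (intro integrableI_nonneg) (auto simp: indicator_def)
  have ih: "integrable lborel h" unfolding h_def using i1 i2 by (rule Bochner_Integration.integrable_add)
  show ?thesis
  proof (rule Bochner_Integration.integrable_bound[OF ih gfun_meas2])
    show "AE x in lborel. norm (gfun p 1 x) \<le> norm (h x)"
    proof (rule AE_I2)
      fix r :: real
      have ge: "0 \<le> gfun p 1 r" unfolding gfun_def by auto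
      have le: "gfun p 1 r \<le> h r"
      proof (cases "r \<le> 0")
        case True then show ?thesis by (simp add: gfun_def h_def indicator_def)
      next
        case False
        then have r: "r > 0" by simp
        show ?thesis
        proof (cases "r \<le> 1")
          case True
          have "0 \<le> exp (- (1 / r powr p))" "0 < exp (-1::real)" by simp_all
          then show ?thesis using r True by (simp add: gfun_def h_def indicator_def) (smt (verit) exp_gt_zero)
        next
          case False
          have "1 - exp (- (1 / r powr p)) \<le> 1 / r powr p"
            using exp_ge_add_one_self[of "- (1 / r powr p)"] by simp
          also have "\<dots> = r powr (-p)" using r by (simp add: powr_minus_divide)
          finally show ?thesis using r False by (simp add: gfun_def h_def indicator_def)
        qed
      qed
      have "0 \<le> h r" unfolding h_def by (auto simp: indicator_def)
      then show "norm (gfun p 1 r) \<le> norm (h r)" using ge le by simp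
    qed
  qed
qed

lemma gfun_int:
  assumes p: "p > 1" and d: "d \<ge> 0"
  shows "integrable lborel (gfun p d) \<and> integral\<^sup>L lborel (gfun p d) = d * integral\<^sup>L lborel (gfun p 1)"
proof (cases "d = 0")
  case True
  have "gfun p d = (\<lambda>_. 0)" using True p unfolding gfun_def by auto
  then show ?thesis using True by simp
next
  case False
  then have dp: "d > 0" using d by simp
  have eq: "(\<lambda>x. gfun p d (0 + d * x)) = gfun p 1" using gfun_scale[OF dp] by auto
  have "integrable lborel (gfun p d)"
    using lborel_integrable_real_affine_iff[of d "gfun p d" 0] False gfun_int1[OF p] eq by simp
  moreover have "integral\<^sup>L lborel (gfun p d) = d * integral\<^sup>L lborel (gfun p 1)"
    using lborel_integral_real_affine[of d "gfun p d" 0] False eq dp by simp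
  ultimately show ?thesis by simp
qed

lemma exp_lim0: "(N::real) > 0 \<Longrightarrow> (p::real) > 0 \<Longrightarrow> ((\<lambda>r::real. exp (- (N / r powr p))) \<longlongrightarrow> 0) (at_right 0)"
  by real_asymp

lemma key_contra:
  fixes D :: "'a \<Rightarrow> 'a \<Rightarrow> real" and c :: "'a \<Rightarrow> real"
  assumes S: "finite S" and p: "p > 1"
    and sym: "\<And>x y. x \<in> S \<Longrightarrow> y \<in> S \<Longrightarrow> D x y = D y x"
    and diag: "\<And>x. D x x = 0"
    and pos: "\<And>x y. x \<in> S \<Longrightarrow> y \<in> S \<Longrightarrow> x \<noteq> y \<Longrightarrow> D x y > 0"
    and cnd: "\<And>v. sum v S = 0 \<Longrightarrow> (\<Sum>x\<in>S. \<Sum>y\<in>S. v x * v y * D x y powr p) \<le> 0"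
    and c: "sum c S = 0" "x1 \<in> S" "c x1 \<noteq> 0"
    and zero: "(\<Sum>x\<in>S. \<Sum>y\<in>S. c x * c y * D x y) = 0"
  shows False
proof -
  define N where "N x y = D x y powr p" for x y
  have Nsym: "N x y = N y x" if "x \<in> S" "y \<in> S" for x y unfolding N_def using sym[OF that] by simp
  have N0: "N x1 x1 = 0" unfolding N_def diag by simp
  have Nd: "N x x = 0" for x unfolding N_def diag by simp
  have Dnn: "D x y \<ge> 0" if "x \<in> S" "y \<in> S" for x y
    using pos[OF that] diag[of x] by (cases "x = y") (auto intro: less_imp_le)
  define H where "H r = (\<Sum>x\<in>S. \<Sum>y\<in>S. c x * c y * exp (- (N x y / r powr p)))" for r
  have Hnn: "0 \<le> H r" if "r > 0" for r
  proof -
    have "0 \<le> (\<Sum>x\<in>S. \<Sum>y\<in>S. c x * c y * exp (- ((1 / r powr p) * N x y)))"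
    proof (rule psd_exp_neg[where N = N and S = S and a = x1 and w = c and t = "1 / r powr p"])
      show "\<And>x y. x \<in> S \<Longrightarrow> y \<in> S \<Longrightarrow> N x y = N y x" by (rule Nsym)
      show "\<And>v. sum v S = 0 \<Longrightarrow> (\<Sum>x\<in>S. \<Sum>y\<in>S. v x * v y * N x y) \<le> 0"
        unfolding N_def by (rule cnd)
    qed (use S c(2) N0 in auto)
    then show ?thesis unfolding H_def by simp
  qed
  have cc0: "(\<Sum>x\<in>S. \<Sum>y\<in>S. c x * c y) = 0"
    using c(1) by (simp add: sum_product[symmetric])
  define C where "C = integral\<^sup>L lborel (gfun p 1)"
  define F where "F r = (\<Sum>x\<in>S. \<Sum>y\<in>S. c x * c y * gfun p (D x y) r)" for r
  have Fint: "integrable lborel F" unfolding F_def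
    using gfun_int[OF p Dnn] by (intro Bochner_Integration.integrable_sum integrable_mult_right) auto
  have "integral\<^sup>L lborel F = (\<Sum>x\<in>S. \<Sum>y\<in>S. c x * c y * integral\<^sup>L lborel (gfun p (D x y)))"
    unfolding F_def using gfun_int[OF p Dnn]
    by (simp add: Bochner_Integration.integral_sum integrable_mult_right)
  also have "\<dots> = (\<Sum>x\<in>S. \<Sum>y\<in>S. c x * c y * D x y) * C"
    unfolding sum_distrib_right C_def using gfun_int[OF p Dnn]
    by (intro sum.cong refl) simp
  finally have F0: "integral\<^sup>L lborel F = 0" using zero by simp
  define G where "G r = (if 0 < r then H r else 0)" for r
  have GF: "G r = - F r" for r
  proof (cases "0 < r")
    case True
    have "F r = (\<Sum>x\<in>S. \<Sum>y\<in>S. c x * c y - c x * c y * exp (- (N x y / r powr p)))"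
      unfolding F_def gfun_def N_def using True by (simp add: algebra_simps)
    also have "\<dots> = - H r" unfolding H_def using cc0 by (simp add: sum_subtractf)
    finally show ?thesis using True by (simp add: G_def)
  next
    case False then show ?thesis by (simp add: G_def F_def gfun_def)
  qed
  have Gint: "integrable lborel G" using Fint unfolding GF by simp
  have G0: "integral\<^sup>L lborel G = 0" using F0 unfolding GF by simp
  have Gnn: "AE r in lborel. 0 \<le> G r" by (rule AE_I2) (simp add: G_def Hnn)
  have AEG: "AE r in lborel. G r = 0" using integral_nonneg_eq_0_iff_AE[OF Gint Gnn] G0 by simp
  have lim: "(H \<longlongrightarrow> (\<Sum>x\<in>S. \<Sum>y\<in>S. c x * c y * (if x = y then 1 else 0))) (at_right 0)"
    unfolding H_def
  proof (intro tendsto_sum tendsto_mult_left)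
    fix x y assume "x \<in> S" "y \<in> S"
    show "((\<lambda>r. exp (- (N x y / r powr p))) \<longlongrightarrow> (if x = y then 1 else 0)) (at_right 0)"
    proof (cases "x = y")
      case True then show ?thesis by (simp add: Nd)
    next
      case False
      have "N x y > 0" unfolding N_def using pos[OF \<open>x \<in> S\<close> \<open>y \<in> S\<close> False] by simp
      then show ?thesis using exp_lim0[of "N x y" p] p False by simp
    qed
  qed
  have lv: "(\<Sum>x\<in>S. \<Sum>y\<in>S. c x * c y * (if x = y then 1 else 0)) = (\<Sum>x\<in>S. c x * c x)"
    using S by (simp add: if_distrib cong: if_cong)
  have sq: "0 < c x1 * c x1" using c(3) by (metis linorder_neq_iff mult_neg_neg mult_pos_pos)
  have "0 < (\<Sum>x\<in>S. c x * c x)"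
    by (rule sum_pos2[where f = "\<lambda>x. c x * c x", OF S c(2) sq]) auto
  then have "\<forall>\<^sub>F r in at_right 0. 0 < H r" using order_tendstoD(1)[OF lim] lv by simp
  then obtain b where b: "b > 0" "\<And>r. r > 0 \<Longrightarrow> r < b \<Longrightarrow> 0 < H r"
    unfolding eventually_at_right_field by auto
  obtain Z where Z: "{r \<in> space lborel. \<not> G r = 0} \<subseteq> Z" "Z \<in> sets lborel" "emeasure lborel Z = 0"
    using AEG by (rule AE_E)
  have "{0<..<b} \<subseteq> {r \<in> space lborel. \<not> G r = 0}" using b(2) by (fastforce simp: G_def)
  then have "emeasure lborel {0<..<b} \<le> emeasure lborel Z" using Z by (intro emeasure_mono) auto
  then show False using Z b by simp
qed

lemma halving:
  fixes g :: "nat \<Rightarrow> nat \<Rightarrow> real"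
  assumes "\<And>k l. g k l = g l k" "\<And>k. g k k = 0"
  shows "2 * (\<Sum>l<m. \<Sum>k<l. g k l) = (\<Sum>l<m. \<Sum>k<m. g k l)"
proof (induction m)
  case (Suc m)
  have "(\<Sum>l<Suc m. \<Sum>k<Suc m. g k l) = (\<Sum>l<m. \<Sum>k<m. g k l) + (\<Sum>l<m. g m l) + (\<Sum>k<m. g k m) + g m m"
    by (simp add: sum.distrib)
  also have "(\<Sum>l<m. g m l) = (\<Sum>k<m. g k m)" using assms(1) by (intro sum.cong refl) auto
  finally show ?case using Suc assms(2) by (simp add: algebra_simps)
qed simp

definition rep :: "('a \<Rightarrow> nat) \<Rightarrow> 'a list \<Rightarrow> 'a list" where
  "rep n xs = concat (map (\<lambda>x. replicate (n x) x) xs)"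

lemma rep_sum_list: "sum_list (map F (rep n xs)) = (\<Sum>x\<leftarrow>xs. real (n x) * F x)"
  for F :: "'a \<Rightarrow> real"
  unfolding rep_def by (induction xs) (simp_all add: sum_list_replicate)

lemma rep_length: "length (rep n xs) = (\<Sum>x\<leftarrow>xs. n x)"
  unfolding rep_def by (induction xs) simp_all

lemma rep_set: "set (rep n xs) \<subseteq> set xs"
  unfolding rep_def by auto

lemma sum_nth_list: "(\<Sum>k<length l. F (l ! k)) = sum_list (map F l)"
  for F :: "'a \<Rightarrow> real"
  by (simp add: sum_list_sum_nth atLeast0LessThan)

lemma gr_int_cnd:
  fixes d :: "'a \<Rightarrow> 'a \<Rightarrow> real" and v :: "'a \<Rightarrow> int"
  assumes S: "finite S" and gr: "gr_exponent S d p"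
    and sym: "\<And>x y. d x y = d y x" and diag: "\<And>x. d x x = 0"
    and v: "sum v S = 0"
  shows "(\<Sum>x\<in>S. \<Sum>y\<in>S. real_of_int (v x) * real_of_int (v y) * d x y powr p) \<le> 0"
proof -
  obtain xs where xs: "set xs = S" "distinct xs" using finite_distinct_list[OF S] by blast
  define N where "N x y = d x y powr p" for x y
  have Nsym: "N x y = N y x" for x y unfolding N_def using sym by simp
  have Nd: "N x x = 0" for x unfolding N_def using diag by simp
  define va where "va x = nat (v x)" for x
  define vb where "vb x = nat (- v x)" for x
  define la where "la = rep va xs"
  define lb where "lb = rep vb xs"
  have sumF: "(\<Sum>k<length (rep n xs). F (rep n xs ! k)) = (\<Sum>x\<in>S. real (n x) * F x)" for n and F :: "'a \<Rightarrow> real"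
    unfolding sum_nth_list rep_sum_list xs(1)[symmetric] using xs(2) by (simp add: sum.distinct_set_conv_list)
  have "int (length la) = int (length lb)"
  proof -
    have "int (length la) - int (length lb) = (\<Sum>x\<in>S. int (va x) - int (vb x))"
      unfolding la_def lb_def rep_length xs(1)[symmetric] using xs(2)
      by (simp add: sum.distinct_set_conv_list[symmetric] sum_subtractf)
    also have "\<dots> = sum v S" unfolding va_def vb_def by (intro sum.cong refl) simp
    finally show ?thesis using v by simp
  qed
  then have len: "length lb = length la" by simp
  define m where "m = length la"
  define a where "a k = la ! k" for k
  define b where "b k = lb ! k" for k
  have mem: "\<forall>k<m. a k \<in> S \<and> b k \<in> S"
    unfolding a_def b_def m_def using rep_set[of va xs] rep_set[of vb xs] xs len
    unfolding la_def lb_def by (auto intro!: nth_mem[THEN subsetD[rotated]])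
  have ineq: "(\<Sum>l<m. \<Sum>k<l. N (a k) (a l) + N (b k) (b l)) \<le> (\<Sum>j<m. \<Sum>i<m. N (a j) (b i))"
    using gr mem unfolding gr_exponent_def N_def by blast
  have sa: "(\<Sum>k<m. F (a k)) = (\<Sum>x\<in>S. real (va x) * F x)" for F :: "'a \<Rightarrow> real"
    unfolding m_def a_def la_def by (rule sumF)
  have sb: "(\<Sum>k<m. F (b k)) = (\<Sum>x\<in>S. real (vb x) * F x)" for F :: "'a \<Rightarrow> real"
    unfolding m_def b_def lb_def len[symmetric] by (rule sumF)
  define A where "A = (\<Sum>x\<in>S. \<Sum>y\<in>S. real (va x) * real (va y) * N x y)"
  define B where "B = (\<Sum>x\<in>S. \<Sum>y\<in>S. real (vb x) * real (vb y) * N x y)"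
  define C where "C = (\<Sum>x\<in>S. \<Sum>y\<in>S. real (va x) * real (vb y) * N x y)"
  have dbl: "(\<Sum>l<m. \<Sum>k<m. N (f k) (g l)) = (\<Sum>x\<in>S. \<Sum>y\<in>S. real (wf x) * real (wg y) * N x y)"
    if sf: "\<And>F. (\<Sum>k<m. F (f k)) = (\<Sum>x\<in>S. real (wf x) * F x)"
      and sg: "\<And>F. (\<Sum>k<m. F (g k)) = (\<Sum>x\<in>S. real (wg x) * F x)" for f g wf wg
  proof -
    have "(\<Sum>l<m. \<Sum>k<m. N (f k) (g l)) = (\<Sum>l<m. \<Sum>x\<in>S. real (wf x) * N x (g l))"
      by (intro sum.cong refl) (rule sf)
    also have "\<dots> = (\<Sum>x\<in>S. real (wf x) * (\<Sum>l<m. N x (g l)))"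
      by (subst sum.swap) (simp add: sum_distrib_left)
    also have "\<dots> = (\<Sum>x\<in>S. real (wf x) * (\<Sum>y\<in>S. real (wg y) * N x y))"
      by (intro sum.cong refl) (simp add: sg)
    also have "\<dots> = (\<Sum>x\<in>S. \<Sum>y\<in>S. real (wf x) * real (wg y) * N x y)"
      by (simp add: sum_distrib_left mult.assoc)
    finally show ?thesis .
  qed
  have LA: "(\<Sum>l<m. \<Sum>k<m. N (a k) (a l)) = A"
    unfolding A_def by (rule dbl) (rule sa)+
  have LB: "(\<Sum>l<m. \<Sum>k<m. N (b k) (b l)) = B"
    unfolding B_def by (rule dbl) (rule sb)+
  have RC: "(\<Sum>j<m. \<Sum>i<m. N (a j) (b i)) = C"
  proof -
    have "(\<Sum>j<m. \<Sum>i<m. N (a j) (b i)) = (\<Sum>i<m. \<Sum>j<m. N (a j) (b i))" by (rule sum.swap)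
    also have "\<dots> = C" unfolding C_def by (rule dbl) (rule sa, rule sb)
    finally show ?thesis .
  qed
  have "2 * (\<Sum>l<m. \<Sum>k<l. N (a k) (a l) + N (b k) (b l)) = (\<Sum>l<m. \<Sum>k<m. N (a k) (a l) + N (b k) (b l))"
    by (rule halving) (simp_all add: Nsym Nd)
  also have "\<dots> = A + B" by (simp only: sum.distrib LA LB)
  finally have "2 * (\<Sum>l<m. \<Sum>k<l. N (a k) (a l) + N (b k) (b l)) = A + B" .
  then have ABC: "A + B \<le> 2 * C" using ineq RC by simp
  have C2: "(\<Sum>x\<in>S. \<Sum>y\<in>S. real (vb x) * real (va y) * N x y) = C"
    unfolding C_def by (subst sum.swap) (simp add: Nsym mult_ac)
  have vr: "real_of_int (v x) = real (va x) - real (vb x)" for x unfolding va_def vb_def by simp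
  have "(\<Sum>x\<in>S. \<Sum>y\<in>S. real_of_int (v x) * real_of_int (v y) * N x y)
    = (\<Sum>x\<in>S. \<Sum>y\<in>S. real (va x) * real (va y) * N x y + real (vb x) * real (vb y) * N x y
         - real (va x) * real (vb y) * N x y - real (vb x) * real (va y) * N x y)"
    unfolding vr by (intro sum.cong refl) (simp add: algebra_simps)
  also have "\<dots> = A + B - C - (\<Sum>x\<in>S. \<Sum>y\<in>S. real (vb x) * real (va y) * N x y)"
    unfolding A_def B_def C_def by (simp only: sum.distrib sum_subtractf)
  also have "\<dots> = A + B - C - C" unfolding C2 ..
  finally have "(\<Sum>x\<in>S. \<Sum>y\<in>S. real_of_int (v x) * real_of_int (v y) * N x y) = A + B - C - C" .
  then show ?thesis using ABC unfolding N_def by simp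
qed

lemma floor_lim: "(\<lambda>k. real_of_int \<lfloor>real (Suc k) * a\<rfloor> / real (Suc k)) \<longlonglongrightarrow> a"
proof (rule real_tendsto_sandwich)
  show "\<forall>\<^sub>F k in sequentially. a - inverse (real (Suc k)) \<le> real_of_int \<lfloor>real (Suc k) * a\<rfloor> / real (Suc k)"
  proof (rule always_eventually, rule allI)
    fix k
    have "real (Suc k) * a - 1 \<le> real_of_int \<lfloor>real (Suc k) * a\<rfloor>" by linarith
    then have "(real (Suc k) * a - 1) / real (Suc k) \<le> real_of_int \<lfloor>real (Suc k) * a\<rfloor> / real (Suc k)"
      by (intro divide_right_mono) auto
    then show "a - inverse (real (Suc k)) \<le> real_of_int \<lfloor>real (Suc k) * a\<rfloor> / real (Suc k)"
      by (simp add: field_simps del: of_nat_Suc)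
  qed
  show "\<forall>\<^sub>F k in sequentially. real_of_int \<lfloor>real (Suc k) * a\<rfloor> / real (Suc k) \<le> a"
  proof (rule always_eventually, rule allI)
    fix k
    have "real_of_int \<lfloor>real (Suc k) * a\<rfloor> \<le> real (Suc k) * a" by linarith
    then show "real_of_int \<lfloor>real (Suc k) * a\<rfloor> / real (Suc k) \<le> a"
      by (simp add: divide_le_eq mult.commute del: of_nat_Suc)
  qed
  show "(\<lambda>k. a - inverse (real (Suc k))) \<longlonglongrightarrow> a"
    using tendsto_diff[OF tendsto_const LIMSEQ_inverse_real_of_nat, of a] by simp
  show "(\<lambda>k. a) \<longlonglongrightarrow> a" by simp
qed

lemma cnd_real:
  fixes N :: "'a \<Rightarrow> 'a \<Rightarrow> real" and w :: "'a \<Rightarrow> real"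
  assumes S: "finite S" "x0 \<in> S"
    and icnd: "\<And>v :: 'a \<Rightarrow> int. sum v S = 0 \<Longrightarrow>
       (\<Sum>x\<in>S. \<Sum>y\<in>S. real_of_int (v x) * real_of_int (v y) * N x y) \<le> 0"
    and w: "sum w S = 0"
  shows "(\<Sum>x\<in>S. \<Sum>y\<in>S. w x * w y * N x y) \<le> 0"
proof -
  define fl where "fl k x = \<lfloor>real (Suc k) * w x\<rfloor>" for k x
  define r where "r k x = (if x = x0 then - (\<Sum>y\<in>S - {x0}. fl k y) else fl k x)" for k x
  define q where "q u = (\<Sum>x\<in>S. \<Sum>y\<in>S. u x * u y * N x y)" for u :: "'a \<Rightarrow> real"
  have rsum: "sum (r k) S = 0" for k
  proof -
    have "sum (r k) S = r k x0 + sum (r k) (S - {x0})" using S by (simp add: sum.remove)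
    also have "sum (r k) (S - {x0}) = (\<Sum>y\<in>S - {x0}. fl k y)" unfolding r_def by (intro sum.cong) auto
    finally show ?thesis unfolding r_def by simp
  qed
  have qle: "q (\<lambda>x. real_of_int (r k x) / real (Suc k)) \<le> 0" for k
  proof -
    have "q (\<lambda>x. real_of_int (r k x) / real (Suc k)) = q (\<lambda>x. real_of_int (r k x)) / (real (Suc k))^2"
      unfolding q_def by (simp add: sum_divide_distrib power2_eq_square)
    moreover have "q (\<lambda>x. real_of_int (r k x)) \<le> 0" unfolding q_def by (rule icnd[OF rsum])
    ultimately show ?thesis by (simp add: divide_nonpos_pos)
  qed
  have lim: "(\<lambda>k. real_of_int (r k x) / real (Suc k)) \<longlonglongrightarrow> w x" if "x \<in> S" for x
  proof (cases "x = x0")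
    case True
    have "(\<lambda>k. - (\<Sum>y\<in>S - {x0}. real_of_int (fl k y) / real (Suc k))) \<longlonglongrightarrow> - (\<Sum>y\<in>S - {x0}. w y)"
      unfolding fl_def by (intro tendsto_minus tendsto_sum floor_lim)
    moreover have "- (\<Sum>y\<in>S - {x0}. w y) = w x0" using w S by (simp add: sum.remove)
    ultimately show ?thesis using True unfolding r_def by (simp add: sum_divide_distrib)
  next
    case False
    then show ?thesis unfolding r_def fl_def using floor_lim by simp
  qed
  have "(\<lambda>k. q (\<lambda>x. real_of_int (r k x) / real (Suc k))) \<longlonglongrightarrow> q w"
    unfolding q_def by (intro tendsto_sum tendsto_mult tendsto_const lim)
  then have "q w \<le> 0" by (rule LIMSEQ_le_const2) (use qle in auto)
  then show ?thesis unfolding q_def .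
qed

lemma dsum1: "(\<Sum>l<m. \<Sum>k<m. F k) = real m * (\<Sum>k<m. F k)" for F :: "nat \<Rightarrow> real"
  by simp
lemma dsum2: "(\<Sum>l<m. \<Sum>k<m. F l) = real m * (\<Sum>k<m. F k)" for F :: "nat \<Rightarrow> real"
  by (simp add: sum_distrib_left mult.commute)
lemma dsum4: "(\<Sum>l<m. \<Sum>k<m. F l * G k) = (\<Sum>k<m. F k) * (\<Sum>k<m. G k)" for F G :: "nat \<Rightarrow> real"
  by (simp add: sum_product)
lemma dsum3: "(\<Sum>l<m. \<Sum>k<m. F k * G l) = (\<Sum>k<m. F k) * (\<Sum>k<m. G k)" for F G :: "nat \<Rightarrow> real"
  unfolding sum_product by (rule sum.swap)

lemma one_dim:
  fixes f g :: "nat \<Rightarrow> real"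
  assumes fg: "\<forall>k<m. f k \<in> {0,1} \<and> g k \<in> {0,1}"
  shows "(\<Sum>l<m. \<Sum>k<l. \<bar>f k - f l\<bar> + \<bar>g k - g l\<bar>) \<le> (\<Sum>j<m. \<Sum>i<m. \<bar>f j - g i\<bar>)"
proof -
  have ab: "\<bar>u - v\<bar> = u + v - 2 * u * v" if "u \<in> {0,1}" "v \<in> {0,1}" for u v :: real
    using that by auto
  define \<alpha> where "\<alpha> = (\<Sum>k<m. f k)"
  define \<beta> where "\<beta> = (\<Sum>k<m. g k)"
  have h: "2 * (\<Sum>l<m. \<Sum>k<l. \<bar>f k - f l\<bar> + \<bar>g k - g l\<bar>) = (\<Sum>l<m. \<Sum>k<m. \<bar>f k - f l\<bar> + \<bar>g k - g l\<bar>)"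
    by (rule halving) (simp_all add: abs_minus_commute)
  also have "\<dots> = (\<Sum>l<m. \<Sum>k<m. (f k + g k) + (f l + g l) - 2 * (f k * f l) - 2 * (g k * g l))"
    using fg by (intro sum.cong refl) (simp add: ab algebra_simps)
  also have "\<dots> = 2 * real m * (\<alpha> + \<beta>) - 2 * (\<alpha> * \<alpha>) - 2 * (\<beta> * \<beta>)"
    unfolding \<alpha>_def \<beta>_def
    by (simp only: sum_subtractf sum.distrib sum_distrib_left[symmetric] dsum1 dsum2 dsum3) (simp add: algebra_simps)
  finally have L: "2 * (\<Sum>l<m. \<Sum>k<l. \<bar>f k - f l\<bar> + \<bar>g k - g l\<bar>) = 2 * real m * (\<alpha> + \<beta>) - 2 * (\<alpha> * \<alpha>) - 2 * (\<beta> * \<beta>)" .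
  have "(\<Sum>j<m. \<Sum>i<m. \<bar>f j - g i\<bar>) = (\<Sum>j<m. \<Sum>i<m. f j + g i - 2 * (f j * g i))"
    using fg by (intro sum.cong refl) (simp add: ab algebra_simps)
  also have "\<dots> = real m * (\<alpha> + \<beta>) - 2 * (\<alpha> * \<beta>)"
    unfolding \<alpha>_def \<beta>_def
    by (simp only: sum_subtractf sum.distrib sum_distrib_left[symmetric] dsum1 dsum2 dsum4) (simp add: algebra_simps sum_distrib_right)
  finally have R: "(\<Sum>j<m. \<Sum>i<m. \<bar>f j - g i\<bar>) = real m * (\<alpha> + \<beta>) - 2 * (\<alpha> * \<beta>)" .
  have "0 \<le> (\<alpha> - \<beta>)^2" by simp
  then show ?thesis using L R by (simp add: power2_eq_square algebra_simps)
qed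

abbreviation cube :: "(real ^ 'n) set" where "cube \<equiv> {x. \<forall>i. x $ i \<in> {0, 1}}"

lemma l1_sym: "l1_dist x y = l1_dist y x"
  unfolding l1_dist_def by (simp add: abs_minus_commute)

lemma l1_diag: "l1_dist x x = 0"
  unfolding l1_dist_def by simp

lemma l1_nonneg: "0 \<le> l1_dist x y"
  unfolding l1_dist_def by (simp add: sum_nonneg)

lemma l1_pos: "x \<noteq> y \<Longrightarrow> 0 < l1_dist x y"
proof -
  assume "x \<noteq> y"
  then obtain i where "x $ i \<noteq> y $ i" by (auto simp: vec_eq_iff)
  then show ?thesis unfolding l1_dist_def
    by (intro sum_pos2[where i = i]) auto
qed

lemma swap3: "(\<Sum>l<m. \<Sum>k<K l. \<Sum>i\<in>I. F l k i) = (\<Sum>i\<in>I. \<Sum>l<m. \<Sum>k<K l. F l k i)"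
  for F :: "nat \<Rightarrow> nat \<Rightarrow> 'b \<Rightarrow> real"
proof -
  have "\<And>l. (\<Sum>k<K l. \<Sum>i\<in>I. F l k i) = (\<Sum>i\<in>I. \<Sum>k<K l. F l k i)" by (rule sum.swap)
  then have "(\<Sum>l<m. \<Sum>k<K l. \<Sum>i\<in>I. F l k i) = (\<Sum>l<m. \<Sum>i\<in>I. \<Sum>k<K l. F l k i)" by simp
  also have "\<dots> = (\<Sum>i\<in>I. \<Sum>l<m. \<Sum>k<K l. F l k i)" by (rule sum.swap)
  finally show ?thesis .
qed

lemma exp1:
  fixes S :: "(real ^ 'n) set"
  assumes "S \<subseteq> cube"
  shows "gr_exponent S l1_dist 1"
  unfolding gr_exponent_def
proof (intro conjI allI impI)
  fix m :: nat and a b :: "nat \<Rightarrow> real ^ 'n"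
  assume ab: "\<forall>k<m. a k \<in> S \<and> b k \<in> S"
  have e: "(\<Sum>l<m. \<Sum>k<l. l1_dist (a k) (a l) powr 1 + l1_dist (b k) (b l) powr 1)
      = (\<Sum>i\<in>UNIV. \<Sum>l<m. \<Sum>k<l. \<bar>a k $ i - a l $ i\<bar> + \<bar>b k $ i - b l $ i\<bar>)"
    unfolding l1_dist_def
    using swap3[where m=m and K="\<lambda>l. l" and I=UNIV and F="\<lambda>l k i. \<bar>a k $ i - a l $ i\<bar> + \<bar>b k $ i - b l $ i\<bar>"]
    by (simp add: l1_nonneg[unfolded l1_dist_def] sum.distrib)
  have e2: "(\<Sum>j<m. \<Sum>i<m. l1_dist (a j) (b i) powr 1) = (\<Sum>t\<in>UNIV. \<Sum>j<m. \<Sum>i<m. \<bar>a j $ t - b i $ t\<bar>)"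
    unfolding l1_dist_def
    using swap3[where m=m and K="\<lambda>l. m" and I=UNIV and F="\<lambda>j i t. \<bar>a j $ t - b i $ t\<bar>"]
    by (simp add: l1_nonneg[unfolded l1_dist_def])
  show "(\<Sum>l<m. \<Sum>k<l. l1_dist (a k) (a l) powr 1 + l1_dist (b k) (b l) powr 1)
         \<le> (\<Sum>j<m. \<Sum>i<m. l1_dist (a j) (b i) powr 1)"
    unfolding e e2
  proof (rule sum_mono)
    fix i
    show "(\<Sum>l<m. \<Sum>k<l. \<bar>a k $ i - a l $ i\<bar> + \<bar>b k $ i - b l $ i\<bar>) \<le> (\<Sum>j<m. \<Sum>t<m. \<bar>a j $ i - b t $ i\<bar>)"
      by (rule one_dim) (use ab assms in auto)
  qed
qed simp

lemma l1_cube: "x \<in> cube \<Longrightarrow> y \<in> cube \<Longrightarrow> l1_dist x y = (\<Sum>i\<in>UNIV. x $ i + y $ i - 2 * (x $ i * y $ i))"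
  unfolding l1_dist_def
proof (intro sum.cong refl)
  fix i assume "x \<in> cube" "y \<in> cube"
  then have "x $ i \<in> {0,1}" "y $ i \<in> {0,1}" by auto
  then show "\<bar>x $ i - y $ i\<bar> = x $ i + y $ i - 2 * (x $ i * y $ i)" by auto
qed

lemma swap3s: "(\<Sum>x\<in>A. \<Sum>y\<in>B. \<Sum>i\<in>I. F x y i) = (\<Sum>i\<in>I. \<Sum>x\<in>A. \<Sum>y\<in>B. F x y i)"
  for F :: "'a \<Rightarrow> 'b \<Rightarrow> 'c \<Rightarrow> real"
proof -
  have "\<And>x. (\<Sum>y\<in>B. \<Sum>i\<in>I. F x y i) = (\<Sum>i\<in>I. \<Sum>y\<in>B. F x y i)" by (rule sum.swap)
  then have "(\<Sum>x\<in>A. \<Sum>y\<in>B. \<Sum>i\<in>I. F x y i) = (\<Sum>x\<in>A. \<Sum>i\<in>I. \<Sum>y\<in>B. F x y i)" by simp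
  also have "\<dots> = (\<Sum>i\<in>I. \<Sum>x\<in>A. \<Sum>y\<in>B. F x y i)" by (rule sum.swap)
  finally show ?thesis .
qed

lemma affine_zero:
  fixes S :: "(real ^ 'n) set" and c :: "real ^ 'n \<Rightarrow> real"
  assumes S: "S \<subseteq> cube" and c1: "sum c S = 0" and c2: "(\<Sum>v\<in>S. c v *\<^sub>R v) = 0"
  shows "(\<Sum>x\<in>S. \<Sum>y\<in>S. c x * c y * l1_dist x y) = 0"
proof -
  have ci: "(\<Sum>x\<in>S. c x * x $ i) = 0" for i
    using arg_cong[OF c2, of "\<lambda>v. v $ i"] by simp
  have "(\<Sum>x\<in>S. \<Sum>y\<in>S. c x * c y * l1_dist x y)
     = (\<Sum>x\<in>S. \<Sum>y\<in>S. \<Sum>i\<in>UNIV. c x * c y * (x $ i + y $ i - 2 * (x $ i * y $ i)))"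
    using S by (intro sum.cong refl) (simp add: l1_cube subset_iff sum_distrib_left)
  also have "\<dots> = (\<Sum>i\<in>UNIV. \<Sum>x\<in>S. \<Sum>y\<in>S. c x * c y * (x $ i + y $ i - 2 * (x $ i * y $ i)))"
    by (rule swap3s)
  also have "\<dots> = (\<Sum>i\<in>(UNIV::'n set). 0)"
  proof (intro sum.cong refl)
    fix i :: 'n
    have "(\<Sum>x\<in>S. \<Sum>y\<in>S. c x * c y * (x $ i + y $ i - 2 * (x $ i * y $ i)))
       = (\<Sum>x\<in>S. \<Sum>y\<in>S. (c x * x $ i) * c y + c x * (c y * y $ i) - 2 * ((c x * x $ i) * (c y * y $ i)))"
      by (intro sum.cong refl) (simp add: algebra_simps)
    also have "\<dots> = (\<Sum>x\<in>S. c x * x $ i) * sum c S + sum c S * (\<Sum>y\<in>S. c y * y $ i)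
        - 2 * ((\<Sum>x\<in>S. c x * x $ i) * (\<Sum>y\<in>S. c y * y $ i))"
      by (simp only: sum_subtractf sum.distrib sum_distrib_left[symmetric] sum_distrib_right[symmetric])
    also have "\<dots> = 0" using ci c1 by simp
    finally show "(\<Sum>x\<in>S. \<Sum>y\<in>S. c x * c y * (x $ i + y $ i - 2 * (x $ i * y $ i))) = 0" .
  qed
  finally show ?thesis by simp
qed

theorem corollary4p4:
  fixes S :: "(real ^ 'n) set"
  assumes "S \<subseteq> {x. \<forall>i. x $ i \<in> {0, 1}}"
    and "card S > CARD('n) + 1"
  shows "gen_roundness S l1_dist = 1"
proof -
  have fin: "finite S" using assms(2) card.infinite by fastforce
  have le1: "p \<le> 1" if gr: "gr_exponent S l1_dist p" for p
  proof (rule ccontr)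
    assume "\<not> p \<le> 1"
    then have p: "p > 1" by simp
    have "affine_dependent S"
      by (rule affine_dependent_biggerset[OF fin]) (use assms(2) in simp)
    then obtain c where c1: "sum c S = 0" and c3: "\<exists>v\<in>S. c v \<noteq> 0" and c2: "(\<Sum>v\<in>S. c v *\<^sub>R v) = 0"
      unfolding affine_dependent_explicit_finite[OF fin] by blast
    then obtain x1 where x1: "x1 \<in> S" "c x1 \<noteq> 0" by blast
    have icnd: "(\<Sum>x\<in>S. \<Sum>y\<in>S. real_of_int (v x) * real_of_int (v y) * l1_dist x y powr p) \<le> 0"
      if "sum v S = 0" for v :: "real ^ 'n \<Rightarrow> int"
      by (rule gr_int_cnd[OF fin gr l1_sym l1_diag that])
    have cnd: "(\<Sum>x\<in>S. \<Sum>y\<in>S. w x * w y * l1_dist x y powr p) \<le> 0" if "sum w S = 0" for w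
      using cnd_real[OF fin x1(1) _ that, of "\<lambda>x y. l1_dist x y powr p"] icnd by blast
    show False
      by (rule key_contra[OF fin p, of l1_dist c x1])
         (use l1_sym l1_diag l1_pos cnd c1 x1 affine_zero[OF assms(1) c1 c2] in auto)
  qed
  show ?thesis
    unfolding gen_roundness_def
  proof (rule Sup_eqI)
    show "y \<le> 1" if "y \<in> ereal ` {p. gr_exponent S l1_dist p}" for y
      using that le1 by auto
    show "1 \<le> y" if "\<And>z. z \<in> ereal ` {p. gr_exponent S l1_dist p} \<Longrightarrow> z \<le> y" for y
      using that[of 1] exp1[OF assms(1)] by (auto simp: one_ereal_def)
  qed
qed

end
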